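(* For $n\in\mathbb{N}$ and $M\in\mathbb{N}_0$, \[ \frac{2\pi}{12n-1}\sum_{k\ge M+1}\frac{\left|A_k^{[2]}(n,0)\right|}{k}I_2\left(\frac{\pi\sqrt{12n-1}}{3k}\right)\le f_M(n). \]
   Context: $I_2$ is the modified Bessel function of the first kind of order $2$. For $k\in\mathbb{N}$ and $0\le h<k$ with $\gcd(h,k)=1$, let $h'$ be an inverse of $h$ modulo $k$, and let $s(h,k):=\sum_{j=1}^{k-1}\left(\frac jk-\frac12\right)\left(\frac{hj}{k}-\left\lfloor\frac{hj}{k}\right\rfloor-\frac12\right)$ be the Dedekind sum. For integers $n,m$ define $A_k^{[2]}(n,m):=\sum_{0\le h<k,\ \gcd(h,k)=1}e^{2\pi i s(h,k)+\frac{2\pi i}{k}(nh+mh')}$. Finally \[ f_M(n):=\frac{\pi^5}{108}+\delta_{M\le\frac{\pi\sqrt{12n-1}}{3}-1}\frac{2\sqrt{6(M+1)}}{(12n-1)^{5/4}}\left(\frac{\pi\sqrt{12n-1}}{3}-M\right)e^{\frac{\pi\sqrt{12n-1}}{3(M+1)}}, \] where $\delta_S=1$ if the statement $S$ holds and $0$ otherwise. *)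

theory Defs
  imports Complex_Main
begin

definition besselI2 :: "real \<Rightarrow> real" where
  "besselI2 x = (\<Sum>m. (x / 2) ^ (2 * m + 2) / (fact m * fact (m + 2)))"

definition dedekind_sum :: "int \<Rightarrow> nat \<Rightarrow> real" where
  "dedekind_sum h k = (\<Sum>j = 1..<k. (real j / real k - 1/2) *
      (real_of_int (h * int j) / real k - real_of_int \<lfloor>real_of_int (h * int j) / real k\<rfloor> - 1/2))"

text \<open>An inverse h' of h modulo k (chosen; the Kloosterman sum does not depend on the choice).\<close>
definition mod_inv :: "int \<Rightarrow> nat \<Rightarrow> int" where
  "mod_inv h k = (SOME h'. (h * h') mod int k = 1 mod int k)"

definition A2 :: "nat \<Rightarrow> int \<Rightarrow> int \<Rightarrow> complex" where
  "A2 k n m = (\<Sum>h\<in>{h. 0 \<le> h \<and> h < int k \<and> gcd h (int k) = 1}.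
      exp (2 * pi * \<i> * complex_of_real (dedekind_sum h k)
           + 2 * pi * \<i> / of_nat k * of_int (n * h + m * mod_inv h k)))"

definition fM :: "nat \<Rightarrow> nat \<Rightarrow> real" where
  "fM M n = pi ^ 5 / 108 +
     (if real M \<le> pi * sqrt (12 * real n - 1) / 3 - 1 then
        2 * sqrt (6 * (real M + 1)) / (12 * real n - 1) powr (5/4)
        * (pi * sqrt (12 * real n - 1) / 3 - real M)
        * exp (pi * sqrt (12 * real n - 1) / (3 * (real M + 1)))
      else 0)"

end

theory Submission
  imports Defs "HOL-Analysis.Analysis"
begin


lemma exp_series_sums: "(\<lambda>m. (x::real) ^ m / fact m) sums exp x"
  using exp_converges[of x] by (simp add: divide_inverse_commute field_class.field_divide_inverse scaleR_conv_of_real mult.commute)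

lemma I2_term_le_small:
  fixes t :: real
  shows "(t / 2) ^ (2 * m + 2) / (fact m * fact (m + 2)) \<le> t^2/8 * ((t^2/4) ^ m / fact m)"
proof -
  have e: "(t / 2) ^ (2 * m + 2) = (t^2/4) * (t^2/4)^m"
    by (simp add: power_mult power2_eq_square[symmetric] power_divide flip: power_mult_distrib)
  have f2: "(2::real) \<le> fact (m+2)"
  proof -
    have "(fact 2::real) \<le> fact (m+2)" by (rule fact_mono) auto
    then show ?thesis by simp
  qed
  have nn: "0 \<le> (t^2/4) * (t^2/4)^m" by simp
  have "(t^2/4) * (t^2/4)^m / (fact m * fact (m + 2)) \<le> (t^2/4) * (t^2/4)^m / (fact m * 2)"
    by (rule divide_left_mono[OF _ nn]) (use f2 in auto)
  also have "\<dots> = t^2/8 * ((t^2/4) ^ m / fact m)" by (simp add: field_simps)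
  finally show ?thesis by (simp only: e)
qed

lemma I2_term_nonneg: "0 \<le> ((t::real) / 2) ^ (2 * m + 2) / (fact m * fact (m + 2))"
proof -
  have "0 \<le> ((t::real) / 2) ^ (2 * m + 2)" by (rule zero_le_even_power) auto
  then show ?thesis by simp
qed

lemma I2_summable: "summable (\<lambda>m. ((t::real) / 2) ^ (2 * m + 2) / (fact m * fact (m + 2)))"
proof (rule summable_comparison_test')
  show "summable (\<lambda>m. t^2/8 * ((t^2/4) ^ m / fact m))"
    using exp_series_sums[of "t^2/4"] by (intro summable_mult) (simp add: sums_summable)
  show "norm (((t::real) / 2) ^ (2 * m + 2) / (fact m * fact (m + 2))) \<le> t^2/8 * ((t^2/4) ^ m / fact m)" for m
    using I2_term_nonneg[of t m] I2_term_le_small[of t m] by simp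
qed

lemma I2_nonneg: "0 \<le> besselI2 t"
  unfolding besselI2_def by (rule suminf_nonneg[OF I2_summable I2_term_nonneg])

lemma I2_small: "besselI2 t \<le> t^2/8 * exp (t^2/4)"
proof -
  have "besselI2 t \<le> (\<Sum>m. t^2/8 * ((t^2/4) ^ m / fact m))"
    unfolding besselI2_def
    by (rule suminf_le[OF I2_term_le_small I2_summable]) (use exp_series_sums[of "t^2/4"] in \<open>intro summable_mult, simp add: sums_summable\<close>)
  also have "\<dots> = t^2/8 * exp (t^2/4)"
    using sums_mult[OF exp_series_sums[of "t^2/4"], of "t^2/8"] by (simp add: sums_iff)
  finally show ?thesis .
qed

lemma I2_mono:
  assumes "0 \<le> s" "s \<le> t"
  shows "besselI2 s \<le> besselI2 t"
  unfolding besselI2_def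
proof (rule suminf_le[OF _ I2_summable I2_summable])
  fix m
  have "(s/2)^(2*m+2) \<le> (t/2)^(2*m+2)" using assms by (intro power_mono) auto
  then show "(s / 2) ^ (2 * m + 2) / (fact m * fact (m + 2)) \<le> (t / 2) ^ (2 * m + 2) / (fact m * fact (m + 2))"
    by (intro divide_right_mono) auto
qed



definition cc :: "nat \<Rightarrow> real" where "cc m = fact (2*m) / (4^m * (fact m)^2)"

lemma cc_rec: "cc (Suc m) = cc m * ((2 * real m + 1) / (2 * real m + 2))"
proof -
  have f1: "(fact (2 * Suc m)::real) = fact (2*m) * ((2 * real m + 1) * (2 * real m + 2))"
    by (simp add: algebra_simps)
  have f2: "(4::real)^(Suc m) * (fact (Suc m))^2 = (4^m * (fact m)^2) * ((2 * real m + 2) * (2 * real m + 2))"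
    by (simp add: algebra_simps power2_eq_square)
  have nz: "(2 * real m + 2) \<noteq> 0" by (simp add: add_nonneg_eq_0_iff)
  have f3: "((2 * real m + 1) * (2 * real m + 2)) / ((2 * real m + 2) * (2 * real m + 2)) = (2 * real m + 1) / (2 * real m + 2)"
    by (rule mult_divide_mult_cancel_right[OF nz])
  have "cc (Suc m) = (fact (2*m) / (4^m * (fact m)^2)) * (((2 * real m + 1) * (2 * real m + 2)) / ((2 * real m + 2) * (2 * real m + 2)))"
    unfolding cc_def f1 f2 by (rule times_divide_times_eq[symmetric])
  then show ?thesis unfolding f3 cc_def .
qed

lemma cc_pos: "0 < cc m" unfolding cc_def by simp

lemma cc_sq: "(cc m)^2 * (4 * real m + 2) \<le> 3"
proof (induction m)
  case 0 then show ?case by (simp add: cc_def)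
next
  case (Suc m)
  define r where "r = (2 * real m + 1) / (2 * real m + 2)"
  have q: "r^2 * (4 * real m + 6) \<le> 4 * real m + 2"
  proof -
    have i: "(2 * real m + 1)^2*(4 * real m + 6) \<le> (4 * real m + 2)*((2 * real m + 2)^2)" by (simp add: power2_eq_square algebra_simps)
    have p: "0 < ((2 * real m + 2)^2)" by (simp add: add_pos_nonneg)
    have "r^2 * (4 * real m + 6) = ((2 * real m + 1)^2*(4 * real m + 6)) / (2 * real m + 2)^2" unfolding r_def power_divide by simp
    also have "\<dots> \<le> 4 * real m + 2" using i p by (simp add: pos_divide_le_eq)
    finally show ?thesis .
  qed
  have cs: "cc (Suc m) = cc m * r" unfolding r_def by (rule cc_rec)
  have "(cc (Suc m))^2 * (4 * real (Suc m) + 2) = (cc m)^2 * (r^2 * (4 * real m + 6))"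
    unfolding cs power_mult_distrib by (simp add: algebra_simps)
  also have "\<dots> \<le> (cc m)^2 * (4 * real m + 2)" by (rule mult_left_mono[OF q]) simp
  also have "\<dots> \<le> 3" using Suc .
  finally show ?case .
qed

lemma b_eq: "((T::real)/2)^(2*m) / (fact m)^2 = T^(2*m)/fact(2*m) * cc m"
proof -
  have "((T::real)/2)^(2*m) = T^(2*m) / 4^m"
    by (simp add: power_divide) (simp add: power_mult)
  moreover have "(fact (2*m)::real) \<noteq> 0" by simp
  ultimately show ?thesis unfolding cc_def by simp
qed

lemma b_le:
  assumes T: "0 < (T::real)"
  shows "(T/2)^(2*m) / (fact m)^2 \<le> sqrt (3/(8*T)) * (T^(2*m)/fact(2*m) + T^(2*m+1)/fact(2*m+1))"
proof -
  define E where "E = T^(2*m)/fact(2*m)"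
  define u where "u = T/(2 * real m+1)"
  have E0: "0 \<le> E" unfolding E_def using T by simp
  have u0: "0 \<le> u" unfolding u_def using T by simp
  have O: "T^(2*m+1)/fact(2*m+1) = E * u"
  proof -
    have f: "(fact (2*m+1)::real) = (2 * real m + 1) * fact (2*m)" by simp
    have "T^(2*m+1)/fact(2*m+1) = (T * T^(2*m)) / ((2 * real m + 1) * fact (2*m))"
      unfolding f power_add power_one_right by (simp add: mult_ac add_ac)
    also have "\<dots> = (T / (2 * real m + 1)) * (T^(2*m) / fact (2*m))" by (rule times_divide_times_eq[symmetric])
    finally show ?thesis unfolding E_def u_def by (metis mult.commute)
  qed
  have l0: "0 \<le> sqrt (3/(8*T)) * (1+u)" using u0 T by simp
  have "(cc m)^2 \<le> 3 / (2*(2 * real m+1))"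
    using cc_sq[of m] by (simp add: field_simps)
  also have "\<dots> \<le> (3/(8*T)) * (1+u)^2"
  proof -
    have "(1+u)^2 - 4*u = (1-u)^2" by (simp add: power2_eq_square algebra_simps)
    then have "4*u \<le> (1+u)^2" using zero_le_power2[of "1-u"] by linarith
    then have "(3/(8*T)) * (4*u) \<le> (3/(8*T)) * (1+u)^2" by (intro mult_left_mono) (use T in auto)
    moreover have "(3/(8*T)) * (4*u) = 3 / (2*(2 * real m+1))" unfolding u_def using T by (simp add: field_simps)
    ultimately show ?thesis by simp
  qed
  also have "\<dots> = (sqrt (3/(8*T)) * (1+u))^2" using T by (simp add: power_mult_distrib)
  finally have "cc m \<le> sqrt (3/(8*T)) * (1+u)"
    by (rule power2_le_imp_le[OF _ l0])
  then have "E * cc m \<le> E * (sqrt (3/(8*T)) * (1+u))" by (rule mult_left_mono[OF _ E0])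
  then show ?thesis unfolding b_eq O E_def[symmetric] by (simp add: algebra_simps)
qed

lemma exp_pairs: "(\<lambda>m. (T::real)^(2*m)/fact(2*m) + T^(2*m+1)/fact(2*m+1)) sums exp T"
proof -
  have "(\<lambda>m. sum (\<lambda>n. T^n/fact n) {m*2..<m*2+2}) sums exp T"
    by (rule sums_group[OF exp_series_sums]) simp
  moreover have "sum (\<lambda>n. T^n/fact n) {m*2..<m*2+2} = T^(2*m)/fact(2*m) + T^(2*m+1)/fact(2*m+1)" for m
  proof -
    have "{m*2..<m*2+2} = {m*2, m*2+1}" by auto
    then show ?thesis by (simp add: mult.commute)
  qed
  ultimately show ?thesis by simp
qed

lemma I2_large:
  assumes T: "0 < (T::real)"
  shows "besselI2 T \<le> sqrt (3/(8*T)) * exp T"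
proof -
  define b where "b m = (T/2)^(2*m) / (fact m)^2" for m
  have b0: "0 \<le> b m" for m unfolding b_def by (simp add: zero_le_even_power)
  have sE: "(\<lambda>m. sqrt (3/(8*T)) * (T^(2*m)/fact(2*m) + T^(2*m+1)/fact(2*m+1))) sums (sqrt (3/(8*T)) * exp T)"
    by (rule sums_mult[OF exp_pairs])
  have sb: "summable b"
    by (rule summable_comparison_test'[OF sums_summable[OF sE]]) (use b0 b_le[OF T] in \<open>auto simp: b_def\<close>)
  have "suminf b \<le> sqrt (3/(8*T)) * exp T"
    using sums_le[OF _ summable_sums[OF sb] sE] b_le[OF T] by (auto simp: b_def)
  have t_le: "(T / 2) ^ (2 * m + 2) / (fact m * fact (m + 2)) \<le> b (Suc m)" for m
  proof -
    have "(fact (Suc m))^2 \<le> (fact m * fact (m + 2) :: real)"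
      by (simp add: power2_eq_square algebra_simps)
    moreover have "0 \<le> (T / 2) ^ (2 * m + 2)" using T by simp
    ultimately have "(T / 2) ^ (2 * m + 2) / (fact m * fact (m + 2)) \<le> (T / 2) ^ (2 * m + 2) / (fact (Suc m))^2"
      by (intro divide_left_mono) auto
    then show ?thesis unfolding b_def by simp
  qed
  have "besselI2 T \<le> (\<Sum>m. b (Suc m))" unfolding besselI2_def
    by (rule suminf_le[OF t_le I2_summable]) (use sb summable_Suc_iff in auto)
  also have "\<dots> = suminf b - b 0" by (rule suminf_split_head[OF sb])
  also have "\<dots> \<le> suminf b" using b0 by simp
  also have "\<dots> \<le> sqrt (3/(8*T)) * exp T"
    using sums_le[OF _ summable_sums[OF sb] sE] b_le[OF T] by (auto simp: b_def)
  finally show ?thesis .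
qed



lemma inv_sq: "(\<lambda>j::nat. 1 / (real j + 1)^2) sums (pi^2/6)"
  using inverse_squares_sums by (simp add: add.commute)

lemma A2_bound: "cmod (A2 k n m) \<le> real k"
proof -
  define S where "S = {h. 0 \<le> h \<and> h < int k \<and> gcd h (int k) = 1}"
  have S: "S \<subseteq> {0..<int k}" unfolding S_def by auto
  have fin: "finite S" by (rule finite_subset[OF S]) simp
  have "card S \<le> card {0..<int k}" by (rule card_mono[OF _ S]) simp
  then have cS: "card S \<le> k" by simp
  have "cmod (A2 k n m) \<le> (\<Sum>h\<in>S. cmod (exp (2 * pi * \<i> * complex_of_real (dedekind_sum h k)
           + 2 * pi * \<i> / of_nat k * of_int (n * h + m * mod_inv h k))))"
    unfolding A2_def S_def[symmetric] by (rule norm_sum)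
  also have "\<dots> = (\<Sum>h\<in>S. 1)"
  proof (rule sum.cong[OF refl])
    fix h
    have "Re (2 * pi * \<i> * complex_of_real (dedekind_sum h k)
           + 2 * pi * \<i> / of_nat k * of_int (n * h + m * mod_inv h k)) = 0"
      by simp
    then show "cmod (exp (2 * pi * \<i> * complex_of_real (dedekind_sum h k)
           + 2 * pi * \<i> / of_nat k * of_int (n * h + m * mod_inv h k))) = 1"
      by (simp only: norm_exp_eq_Re exp_zero)
  qed
  also have "\<dots> = real (card S)" by simp
  also have "\<dots> \<le> real k" using cS by simp
  finally show ?thesis .
qed

lemma exp_quarter: "exp (1/4::real) \<le> 4/3"
proof -
  have h: "3/4 \<le> exp (-(1/4::real))" using exp_ge_add_one_self[of "-(1/4::real)"] by simp
  have "exp (1/4::real) = inverse (exp (-(1/4)))" by (simp add: exp_minus)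
  also have "\<dots> \<le> inverse (3/4)" by (rule le_imp_inverse_le[OF h]) simp
  also have "\<dots> = 4/3" by simp
  finally show ?thesis .
qed

lemma I2_small2:
  assumes "0 \<le> t" "t \<le> 1"
  shows "besselI2 t \<le> t^2/6"
proof -
  have "besselI2 t \<le> t^2/8 * exp (t^2/4)" by (rule I2_small)
  also have "\<dots> \<le> t^2/8 * (4/3)"
  proof (rule mult_left_mono)
    have "t^2 \<le> 1" using assms by (simp add: power_le_one)
    then have "exp (t^2/4) \<le> exp (1/4)" by simp
    then show "exp (t^2/4) \<le> 4/3" using exp_quarter by linarith
  qed simp
  finally show ?thesis by simp
qed



lemma t3: "0 < (r::real) \<Longrightarrow> (pi * r)^2 * (3/(8*((pi * r^2 / 3) / (real M + 1)))) = 9 * pi * (real M + 1) / 8"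
  by (simp add: field_simps power2_eq_square)
lemma t4: "sqrt (9 * pi * (real M + 1) / 8) \<le> sqrt (6 * (real M + 1))"
proof (intro real_sqrt_le_mono)
  have "9 * pi / 8 * (real M + 1) \<le> 6 * (real M + 1)" using pi_less_4 by (intro mult_right_mono) auto
  then show "9 * pi * (real M + 1) / 8 \<le> 6 * (real M + 1)" by simp
qed
lemma t6: "0 < (r::real) \<Longrightarrow> pi * r * sqrt c = sqrt ((pi * r)^2 * c)"
proof -
  assume r0: "0 < r"
  have "sqrt ((pi * r)^2 * c) = sqrt ((pi * r)^2) * sqrt c" by (rule real_sqrt_mult)
  also have "sqrt ((pi * r)^2) = pi * r" using r0 by simp
  finally show ?thesis by simp
qed
lemma t7: assumes y11: "11 \<le> (y::real)" shows "(y powr (1/4))^4 = y"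
proof -
  have "(y powr (1/4))^4 = (y powr (1/4)) powr (real 4)" using y11 by (subst powr_realpow) auto
  also have "\<dots> = y" using y11 by (simp add: powr_powr)
  finally show ?thesis .
qed
lemma t8: assumes y11: "11 \<le> (y::real)" shows "y powr (5/4) = y * y powr (1/4)"
proof -
    have e: "(5/4::real) = 1 + 1/4" by simp
    have "y powr (1 + 1/4) = y powr 1 * y powr (1/4)" by (rule powr_add)
    then show ?thesis unfolding e using y11 by simp
qed
lemma t9: assumes r4: "r^4 = y" "0 < (r::real)" shows "sqrt y = r^2"
  proof -
    have e: "y = (r^2)^2" using r4 by (simp flip: power_mult)
    show ?thesis unfolding e real_sqrt_abs by simp
  qed

lemma t1: "x = pi * r^2 / 3 \<Longrightarrow> r^4 = (y::real) \<Longrightarrow> x^2 = pi^2 * y / 9"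
proof -
  assume xr: "x = pi * r^2 / 3" and r4: "r^4 = y"
  have "x^2 = pi^2 * (r^2)^2 / 9" unfolding xr by (simp add: power_divide power_mult_distrib)
  also have "(r^2)^2 = r^4" by (simp flip: power_mult)
  finally show ?thesis using r4 by simp
qed
lemma t2: "0 < (y::real) \<Longrightarrow> 2 * pi / y * ((pi^2 * y / 9)/6 * (pi^2/6)) = pi^5/162"
  by (simp add: field_simps eval_nat_numeral)
lemma t5: "0 < r \<Longrightarrow> 0 < y \<Longrightarrow> 2 * pi / y * sqrt (3/(8*T)) = 2 / (y * r) * (pi * r * sqrt (3/(8*T)))"
   by (simp add: field_simps)

theorem lemma6p2:
  fixes n M :: nat
  assumes "n \<ge> 1"
  shows "2 * pi / (12 * real n - 1) *
      (\<Sum>j. (let k = j + M + 1 in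
         cmod (A2 k (int n) 0) / real k * besselI2 (pi * sqrt (12 * real n - 1) / (3 * real k))))
    \<le> fM M n"
proof -
  define y where "y = 12 * real n - 1"
  have y11: "11 \<le> y" unfolding y_def using assms by simp
  define x where "x = pi * sqrt y / 3"
  have x0: "0 < x" unfolding x_def using y11 by simp
  define F where "F j = (let k = j + M + 1 in
         cmod (A2 k (int n) 0) / real k * besselI2 (pi * sqrt (12 * real n - 1) / (3 * real k)))" for j
  have Fx: "F j = cmod (A2 (j+M+1) (int n) 0) / real (j+M+1) * besselI2 (x / real (j+M+1))" for j
    unfolding F_def Let_def x_def y_def divide_divide_eq_left ..
  have F0: "0 \<le> F j" for j unfolding Fx by (intro mult_nonneg_nonneg divide_nonneg_nonneg I2_nonneg) auto
  have Fle: "F j \<le> besselI2 (x / real (j+M+1))" for j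
  proof -
    have c1: "cmod (A2 (j+M+1) (int n) 0) / real (j+M+1) \<le> 1"
      using A2_bound[of "j+M+1" "int n" 0] by simp
    have c0: "0 \<le> cmod (A2 (j+M+1) (int n) 0) / real (j+M+1)" by simp
    show ?thesis unfolding Fx by (rule mult_left_le_one_le[OF I2_nonneg c0 c1])
  qed
  have sq: "summable (\<lambda>j::nat. 1 / (real j + 1)^2)" using inv_sq by (rule sums_summable)
  have sF: "summable F"
  proof (rule summable_comparison_test'[where g = "\<lambda>j. x^2/8 * exp (x^2/4) * (1 / (real j + 1)^2)"])
    show "summable (\<lambda>j. x^2/8 * exp (x^2/4) * (1 / (real j + 1)^2))" using sq by (rule summable_mult)
    fix j
    define t where "t = x / real (j+M+1)"
    have t2a: "t^2 \<le> x^2" unfolding t_def using x0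
      by (simp add: power_divide divide_le_eq power_mono)  
    have t2b: "t^2 \<le> x^2 / (real j + 1)^2" unfolding t_def power_divide using x0
      by (intro divide_left_mono power_mono) auto
    have "F j \<le> t^2/8 * exp (t^2/4)" using Fle[of j] I2_small[of t] unfolding t_def by linarith
    also have "\<dots> \<le> (x^2 / (real j + 1)^2)/8 * exp (x^2/4)"
      by (intro mult_mono divide_right_mono t2b) (use t2a in auto)
    finally show "norm (F j) \<le> x^2/8 * exp (x^2/4) * (1 / (real j + 1)^2)" using F0[of j] by simp
  qed
  define N where "N = nat \<lfloor>x\<rfloor> - M"
  have split: "suminf F = (\<Sum>j. F (j + N)) + (\<Sum>j<N. F j)" by (rule suminf_split_initial_segment[OF sF])
  have P1: "(\<Sum>j. F (j + N)) \<le> x^2/6 * (pi^2/6)"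
  proof -
    have le: "F (j + N) \<le> x^2/6 * (1 / (real j + 1)^2)" for j
    proof -
      define k where "k = j + N + M + 1"
      have kx: "x < real k"
      proof -
        have "nat \<lfloor>x\<rfloor> \<le> N + M" unfolding N_def by simp
        then have "real_of_int \<lfloor>x\<rfloor> \<le> real (N + M)" using x0 by linarith
        moreover have "x < real_of_int \<lfloor>x\<rfloor> + 1" by (rule real_of_int_floor_add_one_gt)
        moreover have "real k = real j + real (N + M) + 1" unfolding k_def by simp
        ultimately show ?thesis by linarith
      qed
      have kj: "real j + 1 \<le> real k" unfolding k_def by simp
      have t0: "0 \<le> x / real k" "x / real k \<le> 1" using x0 kx by auto
      have "F (j + N) \<le> besselI2 (x / real k)" using Fle[of "j+N"] unfolding k_def by (simp add: add_ac)
      also have "\<dots> \<le> (x / real k)^2 / 6" by (rule I2_small2[OF t0])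
      also have "\<dots> \<le> (x / (real j + 1))^2 / 6"
        by (intro divide_right_mono power_mono divide_left_mono kj) (use x0 kj in \<open>auto intro!: mult_pos_pos\<close>)
      finally show ?thesis by (simp add: power_divide)
    qed
    have "(\<lambda>j. x^2/6 * (1 / (real j + 1)^2)) sums (x^2/6 * (pi^2/6))" by (rule sums_mult[OF inv_sq])
    moreover have "summable (\<lambda>j. F (j + N))" using sF by (rule summable_ignore_initial_segment)
    ultimately show ?thesis using le by (intro sums_le[OF _ summable_sums]) auto
  qed
  define T where "T = x / (real M + 1)"
  have T0: "0 < T" unfolding T_def using x0 by simp
  define B where "B = sqrt (3/(8*T)) * exp T"
  have P2: "(\<Sum>j<N. F j) \<le> real N * B"
  proof -
    have "F j \<le> B" for j
    proof -
      have "x / real (j+M+1) \<le> T" unfolding T_def using x0 by (intro divide_left_mono) auto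
      then have "besselI2 (x / real (j+M+1)) \<le> besselI2 T" using x0 by (intro I2_mono) auto
      then show ?thesis using Fle[of j] I2_large[OF T0] unfolding B_def by linarith
    qed
    then have "(\<Sum>j<N. F j) \<le> (\<Sum>j<N. B)" by (intro sum_mono)
    then show ?thesis by simp
  qed
  define r where "r = y powr (1/4)"
  have r0: "0 < r" unfolding r_def using y11 by simp
  have r4: "r^4 = y" unfolding r_def by (rule t7[OF y11])
  have sy: "sqrt y = r^2" by (rule t9[OF r4 r0])
  have y54: "y powr (5/4) = y * r" unfolding r_def by (rule t8[OF y11])
  have xr: "x = pi * r^2 / 3" unfolding x_def sy ..
  have x2: "x^2 = pi^2 * y / 9" by (rule t1[OF xr r4])
  define D where "D = (if real M \<le> x - 1 then
        2 * sqrt (6 * (real M + 1)) / y powr (5/4) * (x - real M) * exp T else 0)"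
  have fM_eq: "fM M n = pi^5/108 + D"
    unfolding fM_def D_def T_def x_def y_def by simp
  have ypos: "0 < y" using y11 by simp
  have c1: "2 * pi / y * (x^2/6 * (pi^2/6)) \<le> pi^5/108"
  proof -
    have "2 * pi / y * (x^2/6 * (pi^2/6)) = pi^5/162" unfolding x2 by (rule t2[OF ypos])
    moreover have "pi^5/162 \<le> pi^5/(108::real)" by (rule divide_left_mono) auto
    ultimately show ?thesis by (rule ord_eq_le_trans)
  qed
  have c2: "2 * pi / y * (real N * B) \<le> D"
  proof (cases "N = 0")
    case True
    have "0 \<le> D" unfolding D_def using ypos by (auto intro!: mult_nonneg_nonneg)
    then show ?thesis using True by simp
  next
    case False
    then have MN: "M + 1 \<le> nat \<lfloor>x\<rfloor>" unfolding N_def by simp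
    then have "real (M + 1) \<le> real_of_int \<lfloor>x\<rfloor>" using x0 by linarith
    then have Mx: "real M + 1 \<le> x" by linarith
    have NxM: "real N \<le> x - real M" using MN \<open>real (M + 1) \<le> real_of_int \<lfloor>x\<rfloor>\<close> x0 unfolding N_def by linarith
    have D_eq: "D = 2 * sqrt (6 * (real M + 1)) / y powr (5/4) * (x - real M) * exp T"
      unfolding D_def using Mx by simp
    have key: "2 * pi / y * sqrt (3/(8*T)) \<le> 2 * sqrt (6 * (real M + 1)) / (y * r)"
    proof -
      have "pi * r * sqrt (3/(8*T)) = sqrt ((pi * r)^2 * (3/(8*T)))" by (rule t6[OF r0])
      also have "(pi * r)^2 * (3/(8*T)) = 9 * pi * (real M + 1) / 8"
        unfolding T_def xr by (rule t3[OF r0])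
      also have "sqrt (9 * pi * (real M + 1) / 8) \<le> sqrt (6 * (real M + 1))"
        by (rule t4)
      finally have h: "pi * r * sqrt (3/(8*T)) \<le> sqrt (6 * (real M + 1))" .
      have "2 * pi / y * sqrt (3/(8*T)) = 2 / (y * r) * (pi * r * sqrt (3/(8*T)))"
        by (rule t5[OF r0 ypos])
      also have "\<dots> \<le> 2 / (y * r) * sqrt (6 * (real M + 1))"
        by (rule mult_left_mono[OF h]) (use r0 ypos in simp)
      finally show ?thesis by simp
    qed
    have nn: "0 \<le> 2 * sqrt (6 * (real M + 1)) / (y * r)"
      using ypos r0 by (intro divide_nonneg_pos mult_pos_pos) auto
    have "2 * pi / y * (real N * B) = (2 * pi / y * sqrt (3/(8*T))) * real N * exp T"
      unfolding B_def by (simp add: algebra_simps)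
    also have "\<dots> \<le> (2 * sqrt (6 * (real M + 1)) / (y * r)) * (x - real M) * exp T"
      by (rule mult_right_mono[OF mult_mono[OF key NxM nn of_nat_0_le_iff] exp_ge_zero])
    also have "\<dots> = D" unfolding D_eq y54 ..
    finally show ?thesis .
  qed
  have "2 * pi / y * suminf F = 2 * pi / y * (\<Sum>j. F (j + N)) + 2 * pi / y * (\<Sum>j<N. F j)"
    unfolding split by (simp add: algebra_simps)
  also have "\<dots> \<le> 2 * pi / y * (x^2/6 * (pi^2/6)) + 2 * pi / y * (real N * B)"
    by (intro add_mono mult_left_mono P1 P2) (use ypos in auto)
  also have "\<dots> \<le> pi^5/108 + D" using c1 c2 by simp
  finally show ?thesis unfolding fM_eq F_def y_def .
qed

end
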